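(* Let $Q\in\mathbb{R}^{n\times n}$ be symmetric nonsingular with exactly one negative eigenvalue (and $n-1$ positive eigenvalues), and $A\in\mathbb{R}^{n\times n}$. Then the (nonconvex) set $\mathcal{C_L}\cup(-\mathcal{C_L})=\{x\in\mathbb{R}^n:x^TQx\le0\}$ is an invariant set for the discrete system $x_{k+1}=Ax_k$ (i.e., $x^TQx\le 0$ implies $(Ax)^TQ(Ax)\le0$) if and only if there exists $\mu\ge0$ such that $A^TQA-\mu Q\preceq0$.
   Context: Lorenz cone: for $Q$ symmetric nonsingular with eigenvalues $\lambda_1\ge\dots\ge\lambda_{n-1}>0>\lambda_n$ and orthonormal eigenvectors $u_1,\dots,u_n$ ($Qu_i=\lambda_iu_i$), $\mathcal{C_L}=\{x: x^TQx\le0,\ x^TQu_n\le0\}$. $\preceq0$ denotes negative semidefiniteness. *)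

theory Defs
  imports "HOL-Analysis.Analysis"
begin

text \<open>Q symmetric with eigenvalues lambda_1 >= ... >= lambda_(n-1) > 0 > lambda_n, given
  (as in the paper's setting) by an orthonormal eigenbasis u_i, Q u_i = lambda_i u_i.
  Counting eigenvalues with multiplicity: exactly one index has a negative eigenvalue,
  all others positive (hence Q nonsingular).\<close>
definition one_neg_rest_pos :: "real^'n^'n \<Rightarrow> bool" where
  "one_neg_rest_pos Q \<longleftrightarrow>
     (\<exists>(u :: 'n \<Rightarrow> real^'n) (lam :: 'n \<Rightarrow> real) (m :: 'n).
        (\<forall>i j. u i \<bullet> u j = (if i = j then 1 else 0)) \<and>
        (\<forall>i. Q *v u i = lam i *\<^sub>R u i) \<and>
        lam m < 0 \<and> (\<forall>i. i \<noteq> m \<longrightarrow> lam i > 0))"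

definition neg_semidef :: "real^'n^'n \<Rightarrow> bool" where
  "neg_semidef M \<longleftrightarrow> (\<forall>x. x \<bullet> (M *v x) \<le> 0)"

end

theory Submission
  imports Defs
begin

lemma tr_inner: "(x::real^'n) \<bullet> (transpose A *v y) = (A *v x) \<bullet> y"
  by (metis dot_lmul_matrix vector_transpose_matrix)

lemma vm_inner: "(x::real^'n) \<bullet> (y v* A) = (A *v x) \<bullet> y"
  by (metis dot_lmul_matrix inner_commute)

lemma sym_inner:
  assumes "transpose Q = Q"
  shows "(z::real^'n) \<bullet> (Q *v x) = x \<bullet> (Q *v z)"
  by (metis assms tr_inner inner_commute)

lemma expand:
  assumes "transpose Q = Q"
  shows "((x::real^'n) + s *\<^sub>R z) \<bullet> (Q *v (x + s *\<^sub>R z)) =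
    x \<bullet> (Q *v x) + 2 * s * (x \<bullet> (Q *v z)) + s\<^sup>2 * (z \<bullet> (Q *v z))"
proof -
  have "((x::real^'n) + s *\<^sub>R z) \<bullet> (Q *v (x + s *\<^sub>R z)) =
    x \<bullet> (Q *v x) + s * (x \<bullet> (Q *v z)) + s * (z \<bullet> (Q *v x)) + s\<^sup>2 * (z \<bullet> (Q *v z))"
    by (simp add: matrix_vector_right_distrib matrix_vector_mult_scaleR inner_add_left
        inner_add_right power2_eq_square algebra_simps)
  then show ?thesis using sym_inner[OF assms, of z x] by simp
qed

lemma key:
  fixes Q A :: "real^'n^'n"
  assumes sym: "transpose Q = Q"
    and H: "\<forall>w. w \<bullet> (Q *v w) \<le> 0 \<longrightarrow> (A *v w) \<bullet> (Q *v (A *v w)) \<le> 0"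
    and fx: "x \<bullet> (Q *v x) > 0" and fz: "z \<bullet> (Q *v z) < 0"
  shows "(A *v x) \<bullet> (Q *v (A *v x)) * (z \<bullet> (Q *v z)) \<ge> (A *v z) \<bullet> (Q *v (A *v z)) * (x \<bullet> (Q *v x))"
proof -
  define p where "p = x \<bullet> (Q *v x)"
  define F where "F = z \<bullet> (Q *v z)"
  define b where "b = x \<bullet> (Q *v z)"
  define gx where "gx = (A *v x) \<bullet> (Q *v (A *v x))"
  define gz where "gz = (A *v z) \<bullet> (Q *v (A *v z))"
  define c where "c = (A *v x) \<bullet> (Q *v (A *v z))"
  define \<beta> where "\<beta> = c * F - gz * b"
  have pF: "p > 0" "F < 0" using fx fz p_def F_def by auto
  define r where "r = sqrt (b\<^sup>2 - p * F)"
  have D: "b\<^sup>2 - p * F > 0" using pF by (smt (verit) mult_pos_neg zero_le_power2)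
  have r2: "r\<^sup>2 = b\<^sup>2 - p * F" using D r_def by simp
  have root: "\<phi> \<ge> -2 * s * \<beta>" if s: "F * s\<^sup>2 + 2 * b * s + p = 0" and "\<phi> = gx * F - gz * p" for s \<phi>
  proof -
    have f0: "(x + s *\<^sub>R z) \<bullet> (Q *v (x + s *\<^sub>R z)) = 0"
      using expand[OF sym, of x s z] s unfolding p_def F_def b_def by (simp add: algebra_simps)
    have "A *v (x + s *\<^sub>R z) = A *v x + s *\<^sub>R (A *v z)"
      by (simp add: matrix_vector_right_distrib matrix_vector_mult_scaleR)
    then have g: "(A *v (x + s *\<^sub>R z)) \<bullet> (Q *v (A *v (x + s *\<^sub>R z))) = gx + 2 * s * c + s\<^sup>2 * gz"
      using expand[OF sym, of "A *v x" s "A *v z"] unfolding gx_def gz_def c_def by simp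
    have "gx + 2 * s * c + s\<^sup>2 * gz \<le> 0" using H f0 g by (metis order_refl)
    then have "(gx + 2 * s * c + s\<^sup>2 * gz) * F \<ge> 0" using pF by (simp add: mult_nonpos_nonpos)
    moreover have "(gx + 2 * s * c + s\<^sup>2 * gz) * F = \<phi> + 2 * s * \<beta> + gz * (F * s\<^sup>2 + 2 * b * s + p)"
      using that(2) unfolding \<beta>_def by (simp add: algebra_simps power2_eq_square)
    ultimately show ?thesis using s by simp
  qed
  define s1 where "s1 = (- b + r) / F"
  define s2 where "s2 = (- b - r) / F"
  have e1: "F * s1\<^sup>2 + 2 * b * s1 + p = 0"
    using pF r2 unfolding s1_def by (simp add: field_simps power2_eq_square) (metis distrib_left)
  have e2: "F * s2\<^sup>2 + 2 * b * s2 + p = 0"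
    using pF r2 unfolding s2_def by (simp add: field_simps power2_eq_square) (metis distrib_left)
  have prod: "s1 * s2 = p / F"
    using pF r2 unfolding s1_def s2_def by (simp add: field_simps power2_eq_square) (metis distrib_left)
  have "s1 * s2 < 0" using prod pF by (simp add: divide_pos_neg)
  then have "(s1 * \<beta>) * (s2 * \<beta>) \<le> 0"
    by (metis mult.assoc mult.commute mult_nonpos_nonneg less_imp_le zero_le_square)
  then have "s1 * \<beta> \<le> 0 \<or> s2 * \<beta> \<le> 0"
    by (smt (verit) mult_pos_pos)
  then have "gx * F - gz * p \<ge> 0"
    using root[OF e1 refl] root[OF e2 refl] by linarith
  then show ?thesis unfolding gx_def gz_def p_def F_def by simp
qed

theorem theorem3p16:
  fixes Q A :: "real^'n^'n"
  assumes "transpose Q = Q"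
    and "invertible Q"
    and "one_neg_rest_pos Q"
  shows "(\<forall>x. x \<bullet> (Q *v x) \<le> 0 \<longrightarrow> (A *v x) \<bullet> (Q *v (A *v x)) \<le> 0)
         \<longleftrightarrow> (\<exists>\<mu>::real. \<mu> \<ge> 0 \<and> neg_semidef (transpose A ** Q ** A - \<mu> *\<^sub>R Q))"
proof -
  define f where "f x = x \<bullet> (Q *v x)" for x
  define g where "g x = (A *v x) \<bullet> (Q *v (A *v x))" for x
  have ns: "neg_semidef (transpose A ** Q ** A - \<mu> *\<^sub>R Q) \<longleftrightarrow> (\<forall>x. g x \<le> \<mu> * f x)" for \<mu>
  proof -
    have eq: "x \<bullet> ((transpose A ** Q ** A - \<mu> *\<^sub>R Q) *v x) = g x - \<mu> * f x" for x
      unfolding g_def f_def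
      by (simp add: matrix_vector_mult_diff_rdistrib matrix_vector_mul_assoc[symmetric]
          tr_inner vm_inner inner_diff_right scaleR_matrix_vector_assoc[symmetric])
    show ?thesis unfolding neg_semidef_def by (simp only: eq diff_le_0_iff_le)
  qed
  show ?thesis unfolding ns
  proof
    assume H: "\<forall>x. x \<bullet> (Q *v x) \<le> 0 \<longrightarrow> (A *v x) \<bullet> (Q *v (A *v x)) \<le> 0"
    obtain u :: "'n \<Rightarrow> real^'n" and lam :: "'n \<Rightarrow> real" and m :: 'n where u: "\<forall>i j. u i \<bullet> u j = (if i = j then 1 else (0::real))"
      and ev: "\<forall>i. Q *v u i = lam i *\<^sub>R u i" and lm: "lam m < 0"
      using assms(3) unfolding one_neg_rest_pos_def by metis
    have fu: "f (u m) < 0" unfolding f_def using ev u lm by simp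
    define S where "S = (\<lambda>z. g z / f z) ` {z. f z < 0}"
    have Sne: "S \<noteq> {}" using fu S_def by auto
    have S0: "\<forall>s\<in>S. 0 \<le> s"
      unfolding S_def using H f_def g_def by (auto intro!: divide_nonpos_neg)
    have bdd: "bdd_below S" using S0 by (auto intro: bdd_belowI)
    define \<mu> where "\<mu> = Inf S"
    have mu0: "\<mu> \<ge> 0" unfolding \<mu>_def using Sne S0 by (simp add: cInf_greatest)
    have "g x \<le> \<mu> * f x" for x
    proof (cases "f x < 0")
      case True
      have "\<mu> \<le> g x / f x" unfolding \<mu>_def S_def
        using bdd True S_def by (auto intro!: cInf_lower)
      then show ?thesis using True by (simp add: divide_le_eq mult.commute le_divide_eq)
    next
      case False
      show ?thesis
      proof (cases "f x = 0")
        case True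
        then show ?thesis using H f_def g_def by simp
      next
        case False
        with \<open>\<not> f x < 0\<close> have fx: "f x > 0" by simp
        have "g x / f x \<le> \<mu>" unfolding \<mu>_def
        proof (rule cInf_greatest[OF Sne])
          fix s assume "s \<in> S"
          then obtain z where z: "f z < 0" "s = g z / f z" unfolding S_def by auto
          have "g x * f z \<ge> g z * f x"
            using key[OF assms(1) H, of x z] fx z f_def g_def by simp
          then show "g x / f x \<le> s" using z fx
            by (simp add: divide_le_eq le_divide_eq)
        qed
        then show ?thesis using fx by (simp add: divide_le_eq mult.commute)
      qed
    qed
    then show "\<exists>\<mu>\<ge>0. \<forall>x. g x \<le> \<mu> * f x" using mu0 by blast
  next
    assume "\<exists>\<mu>\<ge>0. \<forall>x. g x \<le> \<mu> * f x"
    then obtain \<mu> where "\<mu> \<ge> 0" "\<forall>x. g x \<le> \<mu> * f x" by blast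
    then show "\<forall>x. x \<bullet> (Q *v x) \<le> 0 \<longrightarrow> (A *v x) \<bullet> (Q *v (A *v x)) \<le> 0"
      unfolding f_def g_def by (smt (verit) mult_nonneg_nonpos)
  qed
qed

end
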